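(* Let $\Sigma$ be an alphabet with $|\Sigma|\geq 3$, let $\#\notin\Sigma$, and let $T,T'$ be strings over $\Sigma\cup\{\#\}$ with $d_H(T,T')=1$, where the differing position $i\in[0,|T|)$ satisfies $T[i]\neq T'[i]=\#$. Let $P$ be a periodic string of length $m$ such that $|\mathsf{occ}_T(P)|-|\mathsf{occ}_{T'}(P)|=y>0$, and suppose $\#$ occurs exactly once in $T'[i-m+1\mathinner{.\,.}i+m-1]$. Then there is a letter $c\in\Sigma$ such that the string $T''$ obtained from $T'$ by replacing $T'[i]$ with $c$ satisfies $|\mathsf{occ}_{T''}(P)|\leq|\mathsf{occ}_{T'}(P)|$.
   Context: $\mathsf{occ}_T(P)$ is the set of starting positions of occurrences of $P$ in $T$; $d_H$ is the Hamming distance. An integer $p>0$ is a period of $P$ if $P[t]=P[t+p]$ for all $t\in[0,|P|-p)$; $\mathsf{per}(P)$ is the smallest period; $P$ is periodic if $\mathsf{per}(P)\leq|P|/2$. The fragment $T'[i-m+1\mathinner{.\,.}i+m-1]$ is understood as clipped to the positions of $T'$. *)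

theory Defs
  imports Main
begin

definition occ :: "'a list \<Rightarrow> 'a list \<Rightarrow> nat set" where
  "occ T P = {j. j + length P \<le> length T \<and> take (length P) (drop j T) = P}"

definition hamming :: "'a list \<Rightarrow> 'a list \<Rightarrow> nat" where
  "hamming S U = card {j. j < length S \<and> S ! j \<noteq> U ! j}"

definition is_period :: "nat \<Rightarrow> 'a list \<Rightarrow> bool" where
  "is_period p P \<longleftrightarrow> 0 < p \<and> (\<forall>t. t + p < length P \<longrightarrow> P ! t = P ! (t + p))"

definition per :: "'a list \<Rightarrow> nat" where
  "per P = (LEAST p. is_period p P)"

definition periodic :: "'a list \<Rightarrow> bool" where
  "periodic P \<longleftrightarrow> 2 * per P \<le> length P"

end

theory Submission
  imports Defs
begin

lemma occ_iff:
  "j \<in> occ S P \<longleftrightarrow> j + length P \<le> length S \<and> (\<forall>t<length P. S!(j+t) = P!t)"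
  unfolding occ_def by (auto simp: list_eq_iff_nth_eq)

lemma occ_finite: "finite (occ S P)"
  by (rule finite_subset[of _ "{..length S}"]) (auto simp: occ_def)

theorem lemma10:
  fixes \<Sigma> :: "'a set" and hash :: 'a and T T' P :: "'a list" and i m :: nat and y :: int
  assumes "3 \<le> card \<Sigma>"
    and "hash \<notin> \<Sigma>"
    and "set T \<subseteq> insert hash \<Sigma>" and "set T' \<subseteq> insert hash \<Sigma>"
    and "length T = length T'"
    and "hamming T T' = 1"
    and "i < length T" and "T ! i \<noteq> T' ! i" and "T' ! i = hash"
    and "set P \<subseteq> insert hash \<Sigma>"
    and "periodic P" and "length P = m"
    and "int (card (occ T P)) - int (card (occ T' P)) = y" and "y > 0"
    and "card {j. j < length T' \<and> i < j + m \<and> j < i + m \<and> T' ! j = hash} = 1"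
  shows "\<exists>c\<in>\<Sigma>. card (occ (T'[i := c]) P) \<le> card (occ T' P)"
proof -
  have mpos: "m > 0"
  proof (rule ccontr)
    assume "\<not> m > 0"
    then have "occ T P = occ T' P" using assms(5,12) by (auto simp: occ_def)
    then show False using assms(13,14) by simp
  qed
  define p where "p = per P"
  have "is_period m P" using mpos assms(12) by (auto simp: is_period_def)
  then have pp: "is_period p P" unfolding p_def per_def by (rule LeastI)
  then have ppos: "p > 0" and pper: "\<And>t. t + p < m \<Longrightarrow> P!t = P!(t+p)"
    using assms(12) by (auto simp: is_period_def)
  have p2: "2 * p \<le> m" using assms(11,12) p_def by (simp add: periodic_def)
  obtain c where c: "c \<in> \<Sigma>" "c \<noteq> T'!(i-p)" "c \<noteq> T'!(i+p)"
  proof -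
    have "\<not> \<Sigma> \<subseteq> {T'!(i-p), T'!(i+p)}"
    proof
      assume "\<Sigma> \<subseteq> {T'!(i-p), T'!(i+p)}"
      then have "card \<Sigma> \<le> card {T'!(i-p), T'!(i+p)}" by (intro card_mono) auto
      also have "\<dots> \<le> 2" by (simp add: card_insert_le_m1)
      finally show False using assms(1) by simp
    qed
    then show ?thesis using that by blast
  qed
  let ?S = "T'[i := c]"
  have sub: "occ ?S P \<subseteq> occ T' P"
  proof
    fix j assume j: "j \<in> occ ?S P"
    then have jl: "j + m \<le> length T'" and jm: "\<And>t. t < m \<Longrightarrow> ?S!(j+t) = P!t"
      using assms(12) by (auto simp: occ_iff)
    show "j \<in> occ T' P"
    proof (cases "j \<le> i \<and> i < j + m")
      case False
      then have "\<forall>t<m. T'!(j+t) = P!t" using jm by (metis nth_list_update_neq add_less_cancel_left le_add1)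
      then show ?thesis using jl assms(12) by (simp add: occ_iff)
    next
      case True
      define t0 where "t0 = i - j"
      have t0: "t0 < m" "i = j + t0" using True t0_def by auto
      have ci: "c = P!t0" using jm[OF t0(1)] t0 assms(5,7) by simp
      show ?thesis
      proof (cases "p \<le> t0")
        case True
        have "P!(t0-p) = P!t0" using pper[of "t0-p"] True t0 by simp
        moreover have "?S!(j+(t0-p)) = P!(t0-p)" using jm t0 by simp
        moreover have "j+(t0-p) = i-p" "i - p \<noteq> i" using True t0 ppos by auto
        ultimately have "T'!(i-p) = c" using ci by simp
        then show ?thesis using c by simp
      next
        case False
        have "P!t0 = P!(t0+p)" using pper[of t0] False t0 p2 by simp
        moreover have "?S!(j+(t0+p)) = P!(t0+p)" using jm[of "t0+p"] t0 False p2 by linarith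
        moreover have "j+(t0+p) = i+p" "i + p \<noteq> i" using t0 ppos by auto
        ultimately have "T'!(i+p) = c" using ci by simp
        then show ?thesis using c by simp
      qed
    qed
  qed
  show ?thesis using c(1) card_mono[OF occ_finite sub] by blast
qed

end
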